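(* Let $q\in\mathbb{C}\setminus\{0,1\}$ with a fixed square root $q^{1/2}$, and let $r\in\mathbb{C}$. For all integers $m,n\ge 0$, $$D_{q,x}\,H_{m,n}(x,y;q,r)=\frac{2q^{-\frac{m-1}{2}}(1-q^m)}{1-q}\,H_{m-1,n}(x,y;q,q^{1/2}r),\qquad D_{q,y}\,H_{m,n}(x,y;q,r)=\frac{2q^{-\frac{n-1}{2}}(1-q^n)}{1-q}\,H_{m,n-1}(x,y;q,q^{1/2}r),$$ with the convention $H_{-1,n}=H_{m,-1}=0$.
   Context: The continuous $q$-Hermite polynomials $H_n(x;q)\in\mathbb{C}[x]$ are defined by $H_{-1}=0$, $H_0=1$, $H_{n+1}(x;q)=2xH_n(x;q)-(1-q^n)H_{n-1}(x;q)$. The bivariate continuous $q$-Hermite polynomials $H_{m,n}(x,y;q,r)\in\mathbb{C}[x,y]$ are defined by $H_{-1,n}=H_{m,-1}=0$, $H_{0,n}(x,y;q,r)=H_n(y;q)$ and, for $m,n\ge 0$, $H_{m+1,n}=2xH_{m,n}-(1-q^m)H_{m-1,n}-q^m(1-q^n)rH_{m,n-1}$ (all evaluated at $(x,y;q,r)$). The Askey–Wilson type operator $D_q$ on polynomials $f(x)$ is defined by writing $x=\tfrac12(z+z^{-1})$ and setting $$D_qf(x)=\frac{f\big(\tfrac12(q^{1/2}z+q^{-1/2}z^{-1})\big)-f\big(\tfrac12(q^{-1/2}z+q^{1/2}z^{-1})\big)}{\tfrac12(q^{1/2}-q^{-1/2})(z-z^{-1})},$$ which is again a polynomial in $x$;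 $D_{q,x}$ and $D_{q,y}$ denote this operator acting in the variable $x$, resp. $y$, of a bivariate polynomial. *)

theory Defs
  imports Complex_Main
begin

text \<open>Continuous q-Hermite polynomials, evaluated at x (H_{-1} = 0 built in).\<close>
fun qHermite :: "nat \<Rightarrow> complex \<Rightarrow> complex \<Rightarrow> complex" where
  "qHermite 0 x q = 1"
| "qHermite (Suc 0) x q = 2 * x"
| "qHermite (Suc (Suc n)) x q =
     2 * x * qHermite (Suc n) x q - (1 - q ^ Suc n) * qHermite n x q"

fun biHermite_nat :: "nat \<Rightarrow> nat \<Rightarrow> complex \<Rightarrow> complex \<Rightarrow> complex \<Rightarrow> complex \<Rightarrow> complex" where
  "biHermite_nat 0 n x y q r = qHermite n y q"
| "biHermite_nat (Suc m) n x y q r =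
     2 * x * biHermite_nat m n x y q r
     - (1 - q ^ m) * (if m = 0 then 0 else biHermite_nat (m - 1) n x y q r)
     - q ^ m * (1 - q ^ n) * r * (if n = 0 then 0 else biHermite_nat m (n - 1) x y q r)"

definition biHermite :: "int \<Rightarrow> int \<Rightarrow> complex \<Rightarrow> complex \<Rightarrow> complex \<Rightarrow> complex \<Rightarrow> complex" where
  "biHermite m n x y q r =
     (if m < 0 \<or> n < 0 then 0 else biHermite_nat (nat m) (nat n) x y q r)"

text \<open>The Askey--Wilson type operator D_q applied to f, evaluated at x = (z + 1/z)/2,
  where s is the fixed square root q^{1/2}. Meaningful for z \<noteq> 0, z \<noteq> z^{-1}.\<close>
definition joukowski :: "complex \<Rightarrow> complex" where
  "joukowski z = (z + inverse z) / 2"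

definition AW_D :: "complex \<Rightarrow> (complex \<Rightarrow> complex) \<Rightarrow> complex \<Rightarrow> complex" where
  "AW_D s f z =
     (f (joukowski (s * z)) - f (joukowski (z / s)))
     / ((s - inverse s) * (z - inverse z) / 2)"

end

theory Submission
  imports Defs
begin

definition Hm1 :: "nat \<Rightarrow> complex \<Rightarrow> complex \<Rightarrow> complex" where
  "Hm1 n x q = (if n = 0 then 0 else qHermite (n - 1) x q)"

lemma qH_rec: "qHermite (Suc n) x q = 2 * x * qHermite n x q - (1 - q ^ n) * Hm1 n x q"
  by (cases n) (auto simp: Hm1_def)

lemma Hm1_Suc[simp]: "Hm1 (Suc n) x q = qHermite n x q"
  by (simp add: Hm1_def)

lemma alg1:
  fixes s t z zi S T ua ub uc wa wb wc h :: complex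
  assumes "s * t = 1" "z * zi = 1" "S * T = 1"
    "ua = T * wa + (S - T) * z * h"
    "ub = T * t * wb + (S * s - T * t) * z * wa"
    "uc = (s * z + t * zi) * ub - (1 - s^2 * S^2) * ua"
    "wb = (z + zi) * wa - (1 - S^2) * h"
    "wc = (z + zi) * wb - (1 - s^2 * S^2) * wa"
  shows "uc = T * t^2 * wc + (S * s^2 - T * t^2) * z * wb"
  using assms by algebra

lemma shiftL:
  fixes s z q :: complex
  assumes z: "z \<noteq> 0" and s: "s \<noteq> 0" and q: "q = s^2"
  shows "qHermite n (joukowski (s * z)) q
     = inverse s ^ n * qHermite n (joukowski z) q
       + (s ^ n - inverse s ^ n) * z * Hm1 n (joukowski z) q
   \<and> qHermite (Suc n) (joukowski (s * z)) q
     = inverse s ^ Suc n * qHermite (Suc n) (joukowski z) q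
       + (s ^ Suc n - inverse s ^ Suc n) * z * Hm1 (Suc n) (joukowski z) q"
proof (induction n)
  case 0
  then show ?case using z s by (simp add: joukowski_def Hm1_def field_simps)
next
  case (Suc n)
  have A: "2 * joukowski (s * z) = s * z + inverse s * inverse z"
    using z s by (simp add: joukowski_def field_simps)
  have B: "2 * joukowski z = z + inverse z"
    by (simp add: joukowski_def field_simps)
  show ?case
  proof (intro conjI)
    show "qHermite (Suc n) (joukowski (s * z)) q =
    inverse s ^ Suc n * qHermite (Suc n) (joukowski z) q +
    (s ^ Suc n - inverse s ^ Suc n) * z * Hm1 (Suc n) (joukowski z) q"
      using Suc by blast
    show "qHermite (Suc (Suc n)) (joukowski (s * z)) q =
    inverse s ^ Suc (Suc n) * qHermite (Suc (Suc n)) (joukowski z) q +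
    (s ^ Suc (Suc n) - inverse s ^ Suc (Suc n)) * z * Hm1 (Suc (Suc n)) (joukowski z) q"
    proof -
      let ?S = "s ^ n" and ?T = "inverse s ^ n" and ?t = "inverse s" and ?zi = "inverse z"
      let ?ua = "qHermite n (joukowski (s * z)) q" and ?ub = "qHermite (Suc n) (joukowski (s * z)) q"
        and ?uc = "qHermite (Suc (Suc n)) (joukowski (s * z)) q"
      let ?wa = "qHermite n (joukowski z) q" and ?wb = "qHermite (Suc n) (joukowski z) q"
        and ?wc = "qHermite (Suc (Suc n)) (joukowski z) q" and ?h = "Hm1 n (joukowski z) q"
      have f1: "s * ?t = 1" using s by simp
      have f2: "z * ?zi = 1" using z by simp
      have f3: "?S * ?T = 1" using s by (simp add: power_mult_distrib[symmetric])
      have f4: "?ua = ?T * ?wa + (?S - ?T) * z * ?h" using Suc.IH by blast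
      have f5: "?ub = ?T * ?t * ?wb + (?S * s - ?T * ?t) * z * ?wa" using Suc.IH by (simp add: mult.commute)
      have f6: "?uc = (s * z + ?t * ?zi) * ?ub - (1 - s^2 * ?S^2) * ?ua"
        using A q by (simp add: power_mult_distrib[symmetric] power_mult[symmetric] mult.commute)
      have f7: "?wb = (z + ?zi) * ?wa - (1 - ?S^2) * ?h"
        using B q by (simp add: qH_rec power_mult[symmetric] mult.commute)
      have f8: "?wc = (z + ?zi) * ?wb - (1 - s^2 * ?S^2) * ?wa"
        using B q by (simp add: power_mult_distrib[symmetric] power_mult[symmetric] mult.commute)
      from alg1[OF f1 f2 f3 f4 f5 f6 f7 f8] show ?thesis
        by (simp add: power2_eq_square mult.assoc mult.commute mult.left_commute)
    qed
  qed
qed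

lemma jouk_inv: "joukowski (inverse z) = joukowski z"
  by (simp add: joukowski_def add.commute)

lemma jouk_div: "s \<noteq> 0 \<Longrightarrow> z \<noteq> 0 \<Longrightarrow> joukowski (z / s) = joukowski (s * inverse z)"
  by (simp add: joukowski_def field_simps)

lemma deltaH:
  fixes s z q :: complex
  assumes z: "z \<noteq> 0" and s: "s \<noteq> 0" and q: "q = s^2"
  shows "qHermite n (joukowski (s * z)) q - qHermite n (joukowski (z / s)) q
     = (s ^ n - inverse s ^ n) * (z - inverse z) * Hm1 n (joukowski z) q"
proof -
  have "inverse z \<noteq> 0" using z by simp
  from shiftL[OF this s q, of n] have e1: "qHermite n (joukowski (z / s)) q
     = inverse s ^ n * qHermite n (joukowski z) q
       + (s ^ n - inverse s ^ n) * inverse z * Hm1 n (joukowski z) q"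
    using jouk_div[OF s z] jouk_inv by simp
  moreover from shiftL[OF z s q, of n] have e2: "qHermite n (joukowski (s * z)) q
     = inverse s ^ n * qHermite n (joukowski z) q
       + (s ^ n - inverse s ^ n) * z * Hm1 n (joukowski z) q" by blast
  ultimately show ?thesis unfolding e1 e2 by (simp add: algebra_simps)
qed

lemma algK:
  fixes s t S T :: complex
  assumes "s * t = 1" "S * T = 1"
  shows "(S * s - T * t) * s * (1 - S^2) = (1 - s^2 * S^2) * (S - T)"
  using assms by algebra

lemma deltaY:
  fixes s z q x r :: complex
  assumes z: "z \<noteq> 0" and s: "s \<noteq> 0" and q: "q = s^2"
  shows "biHermite_nat m n x (joukowski (s * z)) q r - biHermite_nat m n x (joukowski (z / s)) q r
     = (s ^ n - inverse s ^ n) * (z - inverse z) *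
       (if n = 0 then 0 else biHermite_nat m (n - 1) x (joukowski z) q (s * r))"
proof (induction m arbitrary: n rule: less_induct)
  case (less m)
  show ?case
  proof (cases m)
    case 0
    then show ?thesis using deltaH[OF z s q, of n] by (simp add: Hm1_def)
  next
    case (Suc k)
    let ?D = "\<lambda>m n. biHermite_nat m n x (joukowski (s * z)) q r - biHermite_nat m n x (joukowski (z / s)) q r"
    let ?B = "\<lambda>m n. biHermite_nat m n x (joukowski z) q (s * r)"
    let ?K = "\<lambda>n. (s ^ n - inverse s ^ n)"
    let ?Z = "z - inverse z"
    have exp: "?D (Suc k) n = 2 * x * ?D k n - (1 - q^k) * (if k = 0 then 0 else ?D (k - 1) n)
       - q^k * (1 - q^n) * r * (if n = 0 then 0 else ?D k (n - 1))"
      by (simp add: algebra_simps)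
    show ?thesis
    proof (cases n)
      case 0
      then show ?thesis using exp less.IH[of k 0] less.IH[of "k - 1" 0] \<open>m = Suc k\<close> by simp
    next
      case (Suc p)
      have i1: "?D k n = ?K n * ?Z * ?B k p" using less.IH[of k n] Suc \<open>m = Suc k\<close> by simp
      have i2: "k \<noteq> 0 \<Longrightarrow> ?D (k - 1) n = ?K n * ?Z * ?B (k - 1) p"
        using less.IH[of "k - 1" n] Suc \<open>m = Suc k\<close> by simp
      have i3: "?D k p = ?K p * ?Z * (if p = 0 then 0 else ?B k (p - 1))"
        using less.IH[of k p] \<open>m = Suc k\<close> by simp
      have kk: "?K (Suc p) * s * (1 - q^p) = (1 - q^(Suc p)) * ?K p"
        using algK[of s "inverse s" "s^p" "inverse s ^ p"] s q
        by (simp add: power_mult_distrib[symmetric] power_mult[symmetric] mult.commute mult.left_commute)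
      have "?D (Suc k) n = 2 * x * (?K n * ?Z * ?B k p)
          - (1 - q^k) * (if k = 0 then 0 else ?K n * ?Z * ?B (k - 1) p)
          - q^k * (1 - q^n) * r * (?K p * ?Z * (if p = 0 then 0 else ?B k (p - 1)))"
        using exp i1 i2 i3 Suc by simp
      also have "\<dots> = ?K n * ?Z * (2 * x * ?B k p - (1 - q^k) * (if k = 0 then 0 else ?B (k - 1) p))
          - ?K n * ?Z * (q^k * (1 - q^p) * (s * r) * (if p = 0 then 0 else ?B k (p - 1)))"
      proof -
        let ?X = "(if p = 0 then 0 else ?B k (p - 1))"
        have "?K n * ?Z * (q^k * (1 - q^p) * (s * r) * ?X)
            = (?K (Suc p) * s * (1 - q^p)) * (q^k * r * ?Z * ?X)" using Suc by (simp only: mult_ac)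
        also have "\<dots> = (1 - q^(Suc p)) * ?K p * (q^k * r * ?Z * ?X)" by (simp only: kk)
        also have "\<dots> = q^k * (1 - q^n) * r * (?K p * ?Z * ?X)" using Suc by (simp only: mult_ac)
        finally have kk2: "?K n * ?Z * (q^k * (1 - q^p) * (s * r) * ?X) = q^k * (1 - q^n) * r * (?K p * ?Z * ?X)" .
        show ?thesis unfolding kk2 by (simp add: right_diff_distrib mult_ac)
      qed
      also have "\<dots> = ?K n * ?Z * ?B (Suc k) p"
        by (simp add: right_diff_distrib mult_ac)
      finally show ?thesis using Suc \<open>m = Suc k\<close> by simp
    qed
  qed
qed

lemma algG:
  fixes x y q r a b A P Q R S T U V W Xa Xb :: complex
  assumes h1: "A = 2*x*P - (1 - q*a)*Q - q*a*(1 - q*(q*b))*r*R"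
    and h2: "P = 2*y*R - (1 - q*b)*S - q*b*(1 - q*a)*r*T"
    and h3: "Q = 2*y*T - (1 - q*b)*U - q*b*(1 - a)*r*Xa"
    and h4: "V = 2*x*R - (1 - q*a)*T - q*a*(1 - q*b)*r*S"
    and h5: "W = 2*x*S - (1 - q*a)*U - q*a*(1 - b)*r*Xb"
    and h6: "R = 2*x*T - (1 - a)*Xa - a*(1 - q*b)*r*U"
    and h7: "R = 2*y*S - (1 - b)*Xb - b*(1 - q*a)*r*U"
  shows "A = 2*y*V - (1 - q*b)*W - q*b*(1 - q*(q*a))*r*R"
proof -
  have e6: "2*x*T - (1 - a)*Xa - a*(1 - q*b)*r*U - R = 0" using h6 by simp
  have e7: "2*y*S - (1 - b)*Xb - b*(1 - q*a)*r*U - R = 0" using h7 by simp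
  have "A - (2*y*V - (1 - q*b)*W - q*b*(1 - q*(q*a))*r*R)
     = - q*b*(1 - q*a)*r*(2*x*T - (1 - a)*Xa - a*(1 - q*b)*r*U - R)
       + q*a*(1 - q*b)*r*(2*y*S - (1 - b)*Xb - b*(1 - q*a)*r*U - R)"
    unfolding h1 h2 h3 h4 h5 by algebra
  then show ?thesis using e6 e7 by simp
qed

lemma algK0:
  fixes x y q r b A P R V W Xb :: complex
  assumes "A = 2*x*P - (1 - q*(q*b))*r*R"
    "P = 2*y*R - (1 - q*b)*S"
    "V = 2*x*R - (1 - q*b)*r*S"
    "W = 2*x*S - (1 - b)*r*Xb"
    "R = 2*y*S - (1 - b)*Xb"
  shows "A = 2*y*V - (1 - q*b)*W - q*b*(1 - q)*r*R"
  using assms by algebra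

lemma algN0:
  fixes x y q r a A P Q R T V Xa :: complex
  assumes "A = 2*x*P - (1 - q*a)*Q - q*a*(1 - q)*r*R"
    "P = 2*y*R - (1 - q*a)*r*T"
    "Q = 2*y*T - (1 - a)*r*Xa"
    "V = 2*x*R - (1 - q*a)*T"
    "R = 2*x*T - (1 - a)*Xa"
  shows "A = 2*y*V - (1 - q*(q*a))*r*R"
  using assms by algebra

lemma algKN0:
  fixes x y q r A P R V :: complex
  assumes "A = 2*x*P - (1 - q)*r*R" "P = 2*y*R" "V = 2*x*R"
  shows "A = 2*y*V - (1 - q)*r*R"
  using assms by algebra

lemma nrec:
  "biHermite_nat m (Suc n) x y q r = 2 * y * biHermite_nat m n x y q r
     - (1 - q^n) * (if n = 0 then 0 else biHermite_nat m (n - 1) x y q r)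
     - q^n * (1 - q^m) * r * (if m = 0 then 0 else biHermite_nat (m - 1) n x y q r)"
proof (induction m arbitrary: n rule: less_induct)
  case (less m)
  let ?B = "\<lambda>m n. biHermite_nat m n x y q r"
  show ?case
  proof (cases m)
    case 0
    then show ?thesis by (cases n) auto
  next
    case (Suc k)
    show ?thesis
    proof (cases k)
      case 0
      show ?thesis
      proof (cases n)
        case 0
        have "?B 1 1 = 2*y*?B 1 0 - (1 - q)*r*?B 0 0"
          by (rule algKN0[where x=x]) simp_all
        then show ?thesis using \<open>m = Suc k\<close> \<open>k = 0\<close> \<open>n = 0\<close> by simp
      next
        case (Suc p)
        have "?B 1 (Suc (Suc p)) = 2*y*?B 1 (Suc p) - (1 - q*q^p)*?B 1 p - q*q^p*(1 - q)*r*?B 0 (Suc p)"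
        proof (rule algK0[where x=x and S="?B 0 p" and Xb="if p = 0 then 0 else ?B 0 (p - 1)"])
          show "?B 1 p = 2*x*?B 0 p - (1 - q^p)*r*(if p = 0 then 0 else ?B 0 (p - 1))"
            by (cases p) simp_all
          show "?B 0 (Suc p) = 2*y*?B 0 p - (1 - q^p)*(if p = 0 then 0 else ?B 0 (p - 1))"
            by (cases p) simp_all
        qed simp_all
        then show ?thesis using \<open>m = Suc k\<close> \<open>k = 0\<close> \<open>n = Suc p\<close> by simp
      qed
    next
      case (Suc j)
      show ?thesis
      proof (cases n)
        case 0
        have "?B (Suc (Suc j)) 1 = 2*y*?B (Suc (Suc j)) 0 - (1 - q*(q*q^j))*r*?B (Suc j) 0"
        proof (rule algN0[where x=x and T="?B j 0" and Q="?B j 1" and Xa="if j = 0 then 0 else ?B (j - 1) 0"])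
          show "?B j 1 = 2*y*?B j 0 - (1 - q^j)*r*(if j = 0 then 0 else ?B (j - 1) 0)"
            using less.IH[of j 0] \<open>m = Suc k\<close> \<open>k = Suc j\<close> by simp
          show "?B (Suc j) 1 = 2*y*?B (Suc j) 0 - (1 - q*q^j)*r*?B j 0"
            using less.IH[of "Suc j" 0] \<open>m = Suc k\<close> \<open>k = Suc j\<close> by simp
          show "?B (Suc j) 0 = 2*x*?B j 0 - (1 - q^j)*(if j = 0 then 0 else ?B (j - 1) 0)"
            by (cases j) simp_all
        qed simp_all
        then show ?thesis using \<open>m = Suc k\<close> \<open>k = Suc j\<close> \<open>n = 0\<close> by simp
      next
        case (Suc p)
        have "?B (Suc (Suc j)) (Suc (Suc p)) = 2*y*?B (Suc (Suc j)) (Suc p) - (1 - q*q^p)*?B (Suc (Suc j)) p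
            - q*q^p*(1 - q*(q*q^j))*r*?B (Suc j) (Suc p)"
        proof (rule algG[where x=x and P="?B (Suc j) (Suc (Suc p))" and Q="?B j (Suc (Suc p))"
              and S="?B (Suc j) p" and T="?B j (Suc p)" and U="?B j p"
              and Xa="if j = 0 then 0 else ?B (j - 1) (Suc p)" and Xb="if p = 0 then 0 else ?B (Suc j) (p - 1)"])
          show "?B (Suc j) (Suc (Suc p)) = 2*y*?B (Suc j) (Suc p) - (1 - q*q^p)*?B (Suc j) p - q*q^p*(1 - q*q^j)*r*?B j (Suc p)"
            using less.IH[of "Suc j" "Suc p"] \<open>m = Suc k\<close> \<open>k = Suc j\<close> by simp
          show "?B j (Suc (Suc p)) = 2*y*?B j (Suc p) - (1 - q*q^p)*?B j p - q*q^p*(1 - q^j)*r*(if j = 0 then 0 else ?B (j - 1) (Suc p))"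
            using less.IH[of j "Suc p"] \<open>m = Suc k\<close> \<open>k = Suc j\<close> by simp
          show "?B (Suc (Suc j)) p = 2*x*?B (Suc j) p - (1 - q*q^j)*?B j p - q*q^j*(1 - q^p)*r*(if p = 0 then 0 else ?B (Suc j) (p - 1))"
            by (cases p) simp_all
          show "?B (Suc j) (Suc p) = 2*x*?B j (Suc p) - (1 - q^j)*(if j = 0 then 0 else ?B (j - 1) (Suc p)) - q^j*(1 - q*q^p)*r*?B j p"
            by (cases j) simp_all
          show "?B (Suc j) (Suc p) = 2*y*?B (Suc j) p - (1 - q^p)*(if p = 0 then 0 else ?B (Suc j) (p - 1)) - q^p*(1 - q*q^j)*r*?B j p"
            using less.IH[of "Suc j" p] \<open>m = Suc k\<close> \<open>k = Suc j\<close> by simp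
        qed simp_all
        then show ?thesis using \<open>m = Suc k\<close> \<open>k = Suc j\<close> \<open>n = Suc p\<close> by simp
      qed
    qed
  qed
qed


lemma bh_n0: "biHermite_nat m 0 x y q r = qHermite m x q"
proof (induction m rule: less_induct)
  case (less m)
  show ?case
  proof (cases m)
    case 0 then show ?thesis by simp
  next
    case (Suc k)
    have "biHermite_nat (Suc k) 0 x y q r = 2 * x * qHermite k x q - (1 - q^k) * Hm1 k x q"
      using less.IH[of k] less.IH[of "k - 1"] Suc by (simp add: Hm1_def)
    then show ?thesis using Suc qH_rec by simp
  qed
qed

lemma bh_sym: "biHermite_nat m n x y q r = biHermite_nat n m y x q r"
proof (induction m arbitrary: n rule: less_induct)
  case (less m)
  show ?case
  proof (cases m)
    case 0 then show ?thesis by (simp add: bh_n0)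
  next
    case (Suc k)
    have "biHermite_nat (Suc k) n x y q r = 2 * x * biHermite_nat n k y x q r
       - (1 - q^k) * (if k = 0 then 0 else biHermite_nat n (k - 1) y x q r)
       - q^k * (1 - q^n) * r * (if n = 0 then 0 else biHermite_nat (n - 1) k y x q r)"
      using less.IH[of k] less.IH[of "k - 1"] Suc by simp
    also have "\<dots> = biHermite_nat n (Suc k) y x q r"
      by (simp only: nrec[of n k y x q r] mult_ac)
    finally show ?thesis using Suc by simp
  qed
qed


lemma frac_aux: "(b::complex) \<noteq> 0 \<Longrightarrow> c \<noteq> 0 \<Longrightarrow> a * c * X / (b * c / 2) = a * 2 / b * X"
  by (simp add: field_simps)

lemma D_of:
  fixes s z X :: complex and f :: "complex \<Rightarrow> complex"
  assumes z: "z \<noteq> 0" "z^2 \<noteq> 1" and s: "s \<noteq> 0" "s^2 \<noteq> 1"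
    and h: "f (joukowski (s * z)) - f (joukowski (z / s)) = (s^k - inverse s ^ k) * (z - inverse z) * X"
  shows "AW_D s f z = 2 * s powi (1 - int k) * (1 - (s^2)^k) / (1 - s^2) * X"
proof -
  have Z: "z - inverse z \<noteq> 0"
  proof
    assume "z - inverse z = 0"
    then have "z * z = 1" using z(1) by (simp add: field_simps)
    then show False using z(2) by (simp add: power2_eq_square)
  qed
  have S: "s - inverse s \<noteq> 0"
  proof
    assume "s - inverse s = 0"
    then have "s * s = 1" using s(1) by (simp add: field_simps)
    then show False using s(2) by (simp add: power2_eq_square)
  qed
  have s2: "1 - s^2 \<noteq> 0" using s(2) by simp
  have pw: "s powi (1 - int k) = s / s ^ k"
    using s(1) by (simp add: power_int_diff)
  have sk: "s ^ k \<noteq> 0" using s(1) by simp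
  have "AW_D s f z = (s^k - inverse s ^ k) * (z - inverse z) * X / ((s - inverse s) * (z - inverse z) / 2)"
    unfolding AW_D_def h ..
  also have "\<dots> = (s^k - inverse s ^ k) * 2 / (s - inverse s) * X"
    using frac_aux[OF S Z] .
  also have "(s^k - inverse s ^ k) * 2 / (s - inverse s) = 2 * (s / s ^ k) * (1 - (s^2)^k) / (1 - s^2)"
    using S s2 sk s(1) by (simp add: field_simps power_mult[symmetric] power_inverse) (simp add: algebra_simps power2_eq_square power_mult_distrib power_mult)
  finally show ?thesis using pw by simp
qed


theorem proposition3p5:
  fixes q s r :: complex and m n :: nat
  assumes "q \<noteq> 0" and "q \<noteq> 1" and "s ^ 2 = q"
  shows "(\<forall>z y. z \<noteq> 0 \<and> z\<^sup>2 \<noteq> 1 \<longrightarrow>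
           AW_D s (\<lambda>x. biHermite (int m) (int n) x y q r) z
           = 2 * s powi (1 - int m) * (1 - q ^ m) / (1 - q)
             * biHermite (int m - 1) (int n) (joukowski z) y q (s * r)) \<and>
         (\<forall>z x. z \<noteq> 0 \<and> z\<^sup>2 \<noteq> 1 \<longrightarrow>
           AW_D s (\<lambda>y. biHermite (int m) (int n) x y q r) z
           = 2 * s powi (1 - int n) * (1 - q ^ n) / (1 - q)
             * biHermite (int m) (int n - 1) x (joukowski z) q (s * r))"
proof -
  have s0: "s \<noteq> 0" using assms(1,3) by auto
  have s1: "s^2 \<noteq> 1" using assms(2,3) by simp
  have q: "q = s^2" using assms(3) by simp
  have bi: "\<And>x y r. biHermite (int m) (int n) x y q r = biHermite_nat m n x y q r"
    by (simp add: biHermite_def)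
  have bim: "\<And>x y r. biHermite (int m - 1) (int n) x y q r = (if m = 0 then 0 else biHermite_nat (m - 1) n x y q r)"
    by (simp add: biHermite_def nat_diff_distrib)
  have bin: "\<And>x y r. biHermite (int m) (int n - 1) x y q r = (if n = 0 then 0 else biHermite_nat m (n - 1) x y q r)"
    by (simp add: biHermite_def nat_diff_distrib)
  show ?thesis
  proof (intro conjI allI impI)
    fix z y :: complex assume zz: "z \<noteq> 0 \<and> z\<^sup>2 \<noteq> 1"
    have h: "(\<lambda>x. biHermite (int m) (int n) x y q r) (joukowski (s * z))
        - (\<lambda>x. biHermite (int m) (int n) x y q r) (joukowski (z / s))
        = (s^m - inverse s ^ m) * (z - inverse z) *
          biHermite (int m - 1) (int n) (joukowski z) y q (s * r)"
      using deltaY[of z s q n m y r, OF _ s0 q] zz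
      by (simp add: bi bim bh_sym[of m n] bh_sym[of n "m - Suc 0"])
    show "AW_D s (\<lambda>x. biHermite (int m) (int n) x y q r) z
           = 2 * s powi (1 - int m) * (1 - q ^ m) / (1 - q)
             * biHermite (int m - 1) (int n) (joukowski z) y q (s * r)"
      using D_of[OF _ _ s0 s1 h] zz q by simp
  next
    fix z x :: complex assume zz: "z \<noteq> 0 \<and> z\<^sup>2 \<noteq> 1"
    have h: "(\<lambda>y. biHermite (int m) (int n) x y q r) (joukowski (s * z))
        - (\<lambda>y. biHermite (int m) (int n) x y q r) (joukowski (z / s))
        = (s^n - inverse s ^ n) * (z - inverse z) *
          biHermite (int m) (int n - 1) x (joukowski z) q (s * r)"
      using deltaY[of z s q m n x r, OF _ s0 q] zz
      by (simp add: bi bin)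
    show "AW_D s (\<lambda>y. biHermite (int m) (int n) x y q r) z
           = 2 * s powi (1 - int n) * (1 - q ^ n) / (1 - q)
             * biHermite (int m) (int n - 1) x (joukowski z) q (s * r)"
      using D_of[OF _ _ s0 s1 h] zz q by simp
  qed
qed

end
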